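(* Let $(X,d)$ be a metric space, $\lambda\ge0$, $\ell:X\to[0,+\infty)$ lower semicontinuous with $\inf_X\ell=0$, and let $u:X\to\mathbb{R}$ satisfy $\inf_Xu=0$. Then for every $x\in X$, \[T^\infty u(x)=\sup\{v(x): v \text{ is a subsolution of } (\mathcal{G}_\lambda) \text{ and } v\le u\}.\] In particular, if $u$ is a supersolution of $(\mathcal{G}_\lambda)$, then $T^\infty u(x)=\sup\{v(x): v\text{ is a solution of }(\mathcal{G}_\lambda)\text{ and }v\le u\}$ for all $x\in X$.
   Context: Global slope: $G[u](x)=\sup_{y\neq x}\frac{(u(x)-u(y))_+}{d(x,y)}$ if $u(x)<+\infty$, $G[u](x)=+\infty$ otherwise. For $(\mathcal{G}_\lambda)$: a subsolution is $u:X\to\mathbb{R}\cup\{+\infty\}$ with $\inf_Xu=0$ and $\lambda u+G[u]\le\ell$ on $X$; a supersolution is a lower semicontinuous $v$ with $\inf_Xv=0$ and $\lambda v+G[v]\ge\ell$ on $X$; a solution is a lower semicontinuous function that is both. For $u:X\to[0,+\infty]$, $Tu(x)=\inf_{y\in X}\frac{u(y)+\ell(x)d(x,y)}{1+\lambda d(x,y)}$, and $T^\infty u(x)=\lim_{n\to\infty}T^nu(x)$ (a nonincreasing limit). *)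

theory Defs
  imports "HOL-Analysis.Analysis"
begin

definition lsc :: "('a::topological_space \<Rightarrow> 'b::order) \<Rightarrow> bool" where
  "lsc f \<longleftrightarrow> (\<forall>x. \<forall>c. c < f x \<longrightarrow> eventually (\<lambda>y. c < f y) (at x))"

text \<open>Global slope G[u](x). Values in ereal (= R \<union> {+\<infinity>} here).
  The supremum is taken of nonnegative terms; 0 is inserted so that the
  empty supremum (one-point space) is 0.\<close>
definition gslope :: "('a::metric_space \<Rightarrow> ereal) \<Rightarrow> 'a \<Rightarrow> ereal" where
  "gslope u x = (if u x = \<infinity> then \<infinity>
     else Sup (insert 0 ((\<lambda>y. max 0 (u x - u y) / ereal (dist x y)) ` {y. y \<noteq> x})))"

definition subsol :: "real \<Rightarrow> ('a::metric_space \<Rightarrow> real) \<Rightarrow> ('a \<Rightarrow> ereal) \<Rightarrow> bool" where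
  "subsol lam l u \<longleftrightarrow> (\<forall>x. u x \<noteq> -\<infinity>) \<and> (INF x. u x) = 0 \<and>
     (\<forall>x. ereal lam * u x + gslope u x \<le> ereal (l x))"

definition supersol :: "real \<Rightarrow> ('a::metric_space \<Rightarrow> real) \<Rightarrow> ('a \<Rightarrow> ereal) \<Rightarrow> bool" where
  "supersol lam l v \<longleftrightarrow> lsc v \<and> (\<forall>x. v x \<noteq> -\<infinity>) \<and> (INF x. v x) = 0 \<and>
     (\<forall>x. ereal lam * v x + gslope v x \<ge> ereal (l x))"

definition sol :: "real \<Rightarrow> ('a::metric_space \<Rightarrow> real) \<Rightarrow> ('a \<Rightarrow> ereal) \<Rightarrow> bool" where
  "sol lam l v \<longleftrightarrow> subsol lam l v \<and> supersol lam l v"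

definition Top :: "real \<Rightarrow> ('a::metric_space \<Rightarrow> real) \<Rightarrow> ('a \<Rightarrow> ereal) \<Rightarrow> 'a \<Rightarrow> ereal" where
  "Top lam l u x = (INF y. (u y + ereal (l x * dist x y)) / ereal (1 + lam * dist x y))"

definition Tinf :: "real \<Rightarrow> ('a::metric_space \<Rightarrow> real) \<Rightarrow> ('a \<Rightarrow> ereal) \<Rightarrow> 'a \<Rightarrow> ereal" where
  "Tinf lam l u x = lim (\<lambda>n. (Top lam l ^^ n) u x)"

end

theory Submission
  imports Defs
begin

definition Tr :: "real \<Rightarrow> ('a::metric_space \<Rightarrow> real) \<Rightarrow> ('a \<Rightarrow> real) \<Rightarrow> 'a \<Rightarrow> real" where
  "Tr lam l f x = Inf (range (\<lambda>y. (f y + l x * dist x y) / (1 + lam * dist x y)))"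

lemma F_nn:
  assumes "lam \<ge> 0" "l x \<ge> 0" "f y \<ge> (0::real)"
  shows "0 \<le> (f y + l x * dist x y) / (1 + lam * dist x y)"
proof -
  have "0 < 1 + lam * dist x y" using assms(1) by (simp add: add_pos_nonneg)
  then show ?thesis using assms by (intro divide_nonneg_pos add_nonneg_nonneg mult_nonneg_nonneg) auto
qed

lemma Tr_bdd:
  assumes "lam \<ge> 0" "\<And>x. l x \<ge> 0" "\<And>y. f y \<ge> 0"
  shows "bdd_below (range (\<lambda>y. (f y + l x * dist x y) / (1 + lam * dist x y)))"
  using F_nn[of lam l x f] assms by (intro bdd_belowI[where m=0]) auto

lemma Tr_le:
  assumes "lam \<ge> 0" "\<And>x. l x \<ge> 0" "\<And>y. f y \<ge> 0"
  shows "Tr lam l f x \<le> (f y + l x * dist x y) / (1 + lam * dist x y)"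
  unfolding Tr_def by (rule cInf_lower[OF _ Tr_bdd[OF assms]]) auto

lemma Tr_ge:
  assumes "\<And>y. c \<le> (f y + l x * dist x y) / (1 + lam * dist x y)"
  shows "c \<le> Tr lam l f x"
  unfolding Tr_def by (rule cInf_greatest) (use assms in auto)

lemma Tr_nn:
  assumes "lam \<ge> 0" "\<And>x. l x \<ge> 0" "\<And>y. f y \<ge> 0"
  shows "0 \<le> Tr lam l f x"
  by (rule Tr_ge) (use F_nn[of lam l x f] assms in auto)

lemma Tr_self:
  assumes "lam \<ge> 0" "\<And>x. l x \<ge> 0" "\<And>y. f y \<ge> 0"
  shows "Tr lam l f x \<le> f x"
  using Tr_le[of lam l f x x] assms by simp

lemma Top_eq:
  assumes "lam \<ge> 0" "\<And>x. l x \<ge> 0" "\<And>y. f y \<ge> 0"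
  shows "Top lam l (\<lambda>y. ereal (f y)) x = ereal (Tr lam l f x)"
proof -
  have pos: "\<And>y. 0 < 1 + lam * dist x y" using assms(1)
    by (metis add_pos_nonneg mult_nonneg_nonneg zero_le_dist zero_less_one)
  have "Top lam l (\<lambda>y. ereal (f y)) x = Inf (ereal ` range (\<lambda>y. (f y + l x * dist x y) / (1 + lam * dist x y)))"
  proof -
    have e: "(ereal (f y) + ereal (l x * dist x y)) / ereal (1 + lam * dist x y)
        = ereal ((f y + l x * dist x y) / (1 + lam * dist x y))" for y
      using pos[of y] by simp
    show ?thesis unfolding Top_def e by (simp add: image_comp o_def)
  qed
  also have "\<dots> = ereal (Tr lam l f x)"
    unfolding Tr_def by (rule ereal_Inf'[symmetric]) (use Tr_bdd[OF assms] in auto)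
  finally show ?thesis .
qed

lemma gs_elem:
  assumes "y \<noteq> x"
  shows "max 0 (ereal a - ereal b) / ereal (dist x y) = ereal (max 0 (a - b) / dist x y)"
proof -
  have "dist x y > 0" using assms by simp
  then show ?thesis by (cases "a \<le> b") (auto simp: max_def)
qed

lemma gs_eq: "gslope (\<lambda>y. ereal (h y)) x
   = Sup (insert 0 ((\<lambda>y. max 0 (ereal (h x) - ereal (h y)) / ereal (dist x y)) ` {y. y \<noteq> x}))"
  unfolding gslope_def by simp

lemma gs_le:
  assumes "g \<ge> 0" "\<And>y. h x - h y \<le> g * dist x y"
  shows "gslope (\<lambda>y. ereal (h y)) x \<le> ereal g"
  unfolding gs_eq
proof (intro Sup_least)
  fix z assume "z \<in> insert 0 ((\<lambda>y. max 0 (ereal (h x) - ereal (h y)) / ereal (dist x y)) ` {y. y \<noteq> x})"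
  then show "z \<le> ereal g"
  proof
    assume "z = 0" then show ?thesis using assms by simp
  next
    assume "z \<in> (\<lambda>y. max 0 (ereal (h x) - ereal (h y)) / ereal (dist x y)) ` {y. y \<noteq> x}"
    then obtain y where y: "y \<noteq> x" "z = max 0 (ereal (h x) - ereal (h y)) / ereal (dist x y)" by auto
    have d: "dist x y > 0" using y by simp
    have "max 0 (h x - h y) \<le> g * dist x y" using assms d by auto
    then have "max 0 (h x - h y) / dist x y \<le> g" using d by (simp add: pos_divide_le_eq)
    then show ?thesis using y gs_elem[OF y(1)] by simp
  qed
qed

lemma gs_nn: "0 \<le> gslope (\<lambda>y. ereal (h y)) x"
  unfolding gs_eq by (intro Sup_upper) auto

lemma gs_ge:
  assumes "gslope (\<lambda>y. ereal (h y)) x \<le> ereal g"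
  shows "h x - h y \<le> g * dist x y"
proof (cases "y = x")
  case True then show ?thesis by simp
next
  case False
  have d: "dist x y > 0" using False by simp
  have "max 0 (ereal (h x) - ereal (h y)) / ereal (dist x y) \<le> gslope (\<lambda>y. ereal (h y)) x"
    unfolding gs_eq using False by (intro Sup_upper) auto
  then have "ereal (max 0 (h x - h y) / dist x y) \<le> ereal g"
    using assms gs_elem[OF False] order_trans by metis
  then have "max 0 (h x - h y) \<le> g * dist x y" using d by (simp add: pos_divide_le_eq)
  then show ?thesis by simp
qed

lemma sub_cond:
  assumes "ereal c * ereal (h x) + gslope (\<lambda>y. ereal (h y)) x \<le> ereal L"
  shows "h x - h y \<le> (L - c * h x) * dist x y"
proof -
  obtain g where g: "gslope (\<lambda>y. ereal (h y)) x = ereal g"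
  proof (cases "gslope (\<lambda>y. ereal (h y)) x")
    case PInf then show ?thesis using assms by simp
  next
    case MInf then show ?thesis using gs_nn[of h x] by simp
  qed
  have g0: "g \<ge> 0" using gs_nn[of h x] g by simp
  have "c * h x + g \<le> L" using assms g by simp
  have "h x - h y \<le> g * dist x y" using gs_ge[of h x g y] g by simp
  also have "\<dots> \<le> (L - c * h x) * dist x y"
    using \<open>c * h x + g \<le> L\<close> by (intro mult_right_mono) auto
  finally show ?thesis .
qed

lemma super_cond:
  assumes "ereal L \<le> ereal c * ereal (h x) + gslope (\<lambda>y. ereal (h y)) x"
    and "g \<ge> 0" "\<And>y. h x - h y \<le> g * dist x y"
  shows "L \<le> c * h x + g"
proof -
  have "gslope (\<lambda>y. ereal (h y)) x \<le> ereal g" by (rule gs_le) (use assms in auto)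
  then have "ereal c * ereal (h x) + gslope (\<lambda>y. ereal (h y)) x \<le> ereal c * ereal (h x) + ereal g"
    by (rule add_left_mono)
  with assms(1) have "ereal L \<le> ereal (c * h x + g)" by (metis order_trans times_ereal.simps(1) plus_ereal.simps(1))
  then show ?thesis by simp
qed


lemma key:
  fixes s :: "nat \<Rightarrow> 'a::metric_space \<Rightarrow> real"
  assumes lam: "lam \<ge> 0" and lnn: "\<And>x. l x \<ge> 0" and lscl: "lsc l"
    and s0: "s 0 = u" and sS: "\<And>n. s (Suc n) = Tr lam l (s n)"
    and snn: "\<And>n y. 0 \<le> s n y"
    and lim: "\<And>y. (\<lambda>n. s n y) \<longlonglongrightarrow> w y" and wle: "\<And>n y. w y \<le> s n y"
    and lscu: "\<And>x c. c < u x \<Longrightarrow> eventually (\<lambda>y. c < u y) (at x)"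
    and superu: "\<And>x g. g \<ge> 0 \<Longrightarrow> (\<And>z. u x - u z \<le> g * dist x z) \<Longrightarrow> l x \<le> lam * u x + g"
    and g0: "g \<ge> 0" and H: "\<And>z. w x - w z \<le> g * dist x z"
  shows "l x \<le> lam * w x + g"
proof (rule ccontr)
  assume "\<not> ?thesis"
  then have lt: "lam * w x + g < l x" by simp
  define \<delta> where "\<delta> = l x - lam * w x - g"
  have d0: "\<delta> > 0" using lt unfolding \<delta>_def by simp
  have wu: "w x < u x"
  proof (rule ccontr)
    assume "\<not> w x < u x"
    then have eq: "u x = w x" using wle[of x 0] s0 by simp
    have "u x - u z \<le> g * dist x z" for z
      using H[of z] wle[of z 0] s0 eq by simp
    then have "l x \<le> lam * u x + g" using superu[OF g0] by blast
    then show False using lt eq by simp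
  qed
  have "eventually (\<lambda>y. l x - \<delta>/2 < l y) (at x)"
    using lscl d0 unfolding lsc_def by simp
  then obtain r1 where r1: "r1 > 0" "\<And>y. y \<noteq> x \<Longrightarrow> dist y x < r1 \<Longrightarrow> l x - \<delta>/2 < l y"
    unfolding eventually_at by auto
  have "eventually (\<lambda>y. (u x + w x)/2 < u y) (at x)"
    using lscu[of "(u x + w x)/2" x] wu by simp
  then obtain r2 where r2: "r2 > 0" "\<And>y. y \<noteq> x \<Longrightarrow> dist y x < r2 \<Longrightarrow> (u x + w x)/2 < u y"
    unfolding eventually_at by auto
  define r where "r = min r1 r2"
  have r0: "r > 0" using r1 r2 unfolding r_def by simp
  have inB: "l x - \<delta>/2 < l y \<and> (u x + w x)/2 < u y" if "dist x y < r" for y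
  proof (cases "y = x")
    case True then show ?thesis using d0 wu by simp
  next
    case False then show ?thesis using r1 r2 that unfolding r_def by (simp add: dist_commute)
  qed
  define \<gamma> where "\<gamma> = min ((\<delta>/2) / (1/r + lam)) ((u x - w x)/2)"
  have pr: "1/r + lam > 0" using r0 lam by (simp add: add_pos_nonneg)
  have \<gamma>0: "\<gamma> > 0" unfolding \<gamma>_def using d0 wu pr by simp
  have \<gamma>1: "\<gamma> * (1/r + lam) \<le> \<delta>/2"
  proof -
    have "\<gamma> \<le> (\<delta>/2) / (1/r + lam)" unfolding \<gamma>_def by (rule min.cobounded1)
    then show ?thesis using pr by (simp add: pos_le_divide_eq algebra_simps)
  qed
  have \<gamma>2: "\<gamma> \<le> (u x - w x)/2" unfolding \<gamma>_def by (rule min.cobounded2)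
  define b where "b = g + \<gamma>/r"
  define K where "K = w x + \<gamma>"
  define \<psi> where "\<psi> y = (if dist x y < r then K - b * dist x y else w x - g * dist x y)" for y
  have b0: "b \<ge> 0" unfolding b_def using g0 \<gamma>0 r0 by simp
  have psiK: "\<psi> y \<le> K" if "dist x y < r" for y
    using that b0 unfolding \<psi>_def by simp
  have psiw: "\<psi> y \<le> w y" if "\<not> dist x y < r" for y
    using that H[of y] unfolding \<psi>_def by simp
  have bl: "b \<le> l y - lam * \<psi> y" if "dist x y < r" for y
  proof -
    have A: "lam * \<psi> y \<le> lam * K" using psiK[OF that] lam by (rule mult_left_mono)
    have B: "\<gamma>/r + lam * \<gamma> \<le> \<delta>/2" using \<gamma>1 by (simp add: algebra_simps)
    have C: "l x - \<delta>/2 < l y" using inB[OF that] by simp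
    have D: "lam * K = lam * w x + lam * \<gamma>" unfolding K_def by (simp add: algebra_simps)
    show ?thesis using A B C D unfolding b_def \<delta>_def by argo
  qed
  have pdiff: "\<psi> y - \<psi> z \<le> b * dist y z" if "dist x y < r" for y z
  proof (cases "dist x z < r")
    case True
    have "dist x z \<le> dist x y + dist y z" by (rule dist_triangle)
    then have "b * dist x z \<le> b * (dist x y + dist y z)" using b0 by (rule mult_left_mono)
    then show ?thesis using True that unfolding \<psi>_def by (simp add: algebra_simps)
  next
    case False
    have tri: "dist x z \<le> dist x y + dist y z" by (rule dist_triangle)
    then have "g * dist x z \<le> g * (dist x y + dist y z)" using g0 by (rule mult_left_mono)
    moreover have "(\<gamma>/r) * (r - dist x y) \<le> (\<gamma>/r) * dist y z"
      using False tri \<gamma>0 r0 by (intro mult_left_mono) auto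
    moreover have "(\<gamma>/r) * r = \<gamma>" using r0 by simp
    ultimately show ?thesis using False that unfolding \<psi>_def b_def K_def
      by (simp add: algebra_simps)
  qed
  have stepF: "\<psi> y \<le> (\<psi> z + l y * dist y z) / (1 + lam * dist y z)" if "dist x y < r" for y z
  proof -
    have p: "0 < 1 + lam * dist y z" using lam by (simp add: add_pos_nonneg)
    have "\<psi> y - \<psi> z \<le> (l y - lam * \<psi> y) * dist y z"
      using pdiff[OF that, of z] bl[OF that] mult_right_mono[of b "l y - lam * \<psi> y" "dist y z"]
      by simp
    then have "\<psi> y * (1 + lam * dist y z) \<le> \<psi> z + l y * dist y z" by (simp add: algebra_simps)
    then show ?thesis using p by (simp add: pos_le_divide_eq)
  qed
  have claim: "\<psi> y \<le> s n y" for n y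
  proof (induction n arbitrary: y)
    case 0
    show ?case
    proof (cases "dist x y < r")
      case True
      then show ?thesis using psiK[OF True] inB[OF True] \<gamma>2 s0 unfolding K_def by simp
    next
      case False then show ?thesis using psiw[OF False] wle[of y 0] by simp
    qed
  next
    case (Suc n)
    show ?case
    proof (cases "dist x y < r")
      case True
      have "\<psi> y \<le> (s n z + l y * dist y z) / (1 + lam * dist y z)" for z
      proof -
        have p: "0 < 1 + lam * dist y z" using lam by (simp add: add_pos_nonneg)
        have "(\<psi> z + l y * dist y z) / (1 + lam * dist y z) \<le> (s n z + l y * dist y z) / (1 + lam * dist y z)"
          using Suc[of z] p by (intro divide_right_mono) auto
        then show ?thesis using stepF[OF True, of z] by simp
      qed
      then show ?thesis unfolding sS by (rule Tr_ge)
    next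
      case False then show ?thesis using psiw[OF False] wle[of y "Suc n"] by simp
    qed
  qed
  have "\<psi> x = K" unfolding \<psi>_def using r0 by simp
  then have "K \<le> w x" using claim[of x] by (intro LIMSEQ_le_const[OF lim]) auto
  then show False using \<gamma>0 unfolding K_def by simp
qed


theorem theorem4p5:
  fixes lam :: real and l :: "'a::metric_space \<Rightarrow> real" and u :: "'a \<Rightarrow> real"
  assumes "lam \<ge> 0"
    and "\<And>x. l x \<ge> 0" and "lsc l" and "(INF x. ereal (l x)) = 0"
    and "(INF x. ereal (u x)) = 0"
  shows "(\<forall>x. Tinf lam l (\<lambda>y. ereal (u y)) x
            = Sup {v x | v. subsol lam l v \<and> (\<forall>y. v y \<le> ereal (u y))})
       \<and> (supersol lam l (\<lambda>y. ereal (u y)) \<longrightarrow>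
          (\<forall>x. Tinf lam l (\<lambda>y. ereal (u y)) x
            = Sup {v x | v. sol lam l v \<and> (\<forall>y. v y \<le> ereal (u y))}))"
proof -
  note lam = assms(1) and lnn = assms(2) and lscl = assms(3) and uinf = assms(5)
  have unn: "0 \<le> u x" for x
  proof -
    have "(INF x. ereal (u x)) \<le> ereal (u x)" by (rule INF_lower) simp
    then show ?thesis using uinf by simp
  qed
  define s where "s n = (Tr lam l ^^ n) u" for n
  have s0: "s 0 = u" unfolding s_def by simp
  have sS: "s (Suc n) = Tr lam l (s n)" for n unfolding s_def by simp
  have snn: "0 \<le> s n y" for n y
  proof (induction n arbitrary: y)
    case 0 then show ?case using unn s0 by simp
  next
    case (Suc n) then show ?case unfolding sS by (intro Tr_nn[OF lam lnn]) auto
  qed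
  have sdec: "s (Suc n) y \<le> s n y" for n y
    unfolding sS by (rule Tr_self[OF lam lnn snn])
  have "\<exists>L. (\<lambda>n. s n y) \<longlonglongrightarrow> L" for y
  proof -
    have "antimono_on UNIV (\<lambda>n. s n y)"
      using sdec by (intro decseq_SucI) auto
    moreover have "\<forall>i. 0 \<le> s i y" using snn by auto
    ultimately obtain L where "(\<lambda>n. s n y) \<longlonglongrightarrow> L"
      by (rule decseq_convergent)
    then show ?thesis by blast
  qed
  then obtain w where lim: "\<And>y. (\<lambda>n. s n y) \<longlonglongrightarrow> w y" by metis
  have smono: "s n y \<le> s m y" if "m \<le> n" for m n y
    using that
  proof (induction n)
    case 0 then show ?case by simp
  next
    case (Suc n) then show ?case using sdec[of n y] by (cases "m = Suc n") auto
  qed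
  have wle: "w y \<le> s n y" for n y
    by (rule LIMSEQ_le_const2[OF lim]) (use smono in auto)
  have wnn: "0 \<le> w y" for y
    by (rule LIMSEQ_le_const[OF lim]) (use snn in auto)
  have wu: "w y \<le> u y" for y using wle[of y 0] s0 by simp
  have Top_iter: "(Top lam l ^^ n) (\<lambda>y. ereal (u y)) = (\<lambda>y. ereal (s n y))" for n
  proof (induction n)
    case 0 then show ?case using s0 by simp
  next
    case (Suc n)
    show ?case using Suc by (simp add: Top_eq[OF lam lnn snn] sS)
  qed
  have Tinf_eq: "Tinf lam l (\<lambda>y. ereal (u y)) x = ereal (w x)" for x
    unfolding Tinf_def Top_iter by (rule limI) (rule tendsto_ereal[OF lim])
  have wsub: "w x * (1 + lam * dist x y) \<le> w y + l x * dist x y" for x y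
  proof -
    have p: "0 < 1 + lam * dist x y" using lam by (simp add: add_pos_nonneg)
    have "(\<lambda>n. (s n y + l x * dist x y) / (1 + lam * dist x y))
        \<longlonglongrightarrow> (w y + l x * dist x y) / (1 + lam * dist x y)"
      by (intro tendsto_intros lim) (use p in auto)
    moreover have "w x \<le> (s n y + l x * dist x y) / (1 + lam * dist x y)" for n
    proof -
      have "w x \<le> s (Suc n) x" by (rule wle)
      also have "\<dots> \<le> (s n y + l x * dist x y) / (1 + lam * dist x y)"
        unfolding sS by (rule Tr_le[OF lam lnn snn])
      finally show ?thesis .
    qed
    ultimately have "w x \<le> (w y + l x * dist x y) / (1 + lam * dist x y)"
      by (intro LIMSEQ_le_const) auto
    then show ?thesis using p by (simp add: pos_le_divide_eq)
  qed
  have wdiff: "w x - w y \<le> (l x - lam * w x) * dist x y" for x y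
    using wsub[of x y] by (simp add: algebra_simps)
  have winf: "(INF x. ereal (w x)) = 0"
  proof (rule antisym)
    have "(INF x. ereal (w x)) \<le> (INF x. ereal (u x))"
      by (rule INF_mono) (use wu in auto)
    then show "(INF x. ereal (w x)) \<le> 0" using uinf by simp
    show "0 \<le> (INF x. ereal (w x))" by (rule INF_greatest) (use wnn in auto)
  qed
  have lamw: "lam * w x \<le> l x" for x
  proof (cases "\<exists>y. y \<noteq> x \<and> w y \<le> w x")
    case True
    then obtain y where y: "y \<noteq> x" "w y \<le> w x" by auto
    have d: "dist x y > 0" using y by simp
    have e: "w x + lam * w x * dist x y \<le> w y + l x * dist x y"
      using wsub[of x y] by (simp add: algebra_simps)
    have "(lam * w x) * dist x y \<le> l x * dist x y"
      using e y(2) by linarith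
    then show ?thesis using d by (simp add: mult_le_cancel_right)
  next
    case False
    then have "ereal (w x) \<le> ereal (w y)" for y by (cases "y = x") auto
    then have "ereal (w x) \<le> (INF y. ereal (w y))" by (intro INF_greatest) auto
    then have "w x \<le> 0" using winf by simp
    then have "w x = 0" using wnn[of x] by simp
    then show ?thesis using lnn[of x] by simp
  qed
  have wsubsol: "subsol lam l (\<lambda>y. ereal (w y))"
    unfolding subsol_def
  proof (intro conjI allI)
    fix x
    show "ereal (w x) \<noteq> -\<infinity>" by simp
    show "(INF x. ereal (w x)) = 0" by (rule winf)
    have "gslope (\<lambda>y. ereal (w y)) x \<le> ereal (l x - lam * w x)"
      by (rule gs_le) (use lamw[of x] wdiff[of x] in auto)
    then have "ereal lam * ereal (w x) + gslope (\<lambda>y. ereal (w y)) x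
        \<le> ereal lam * ereal (w x) + ereal (l x - lam * w x)" by (rule add_left_mono)
    then show "ereal lam * ereal (w x) + gslope (\<lambda>y. ereal (w y)) x \<le> ereal (l x)" by simp
  qed
  have below: "v x \<le> ereal (w x)" if sv: "subsol lam l v" and vu: "\<forall>y. v y \<le> ereal (u y)" for v x
  proof -
    define vr where "vr y = real_of_ereal (v y)" for y
    have vfin: "v y = ereal (vr y)" for y
    proof -
      have "v y \<noteq> -\<infinity>" using sv unfolding subsol_def by simp
      moreover have "v y \<noteq> \<infinity>" using vu[rule_format, of y] by auto
      ultimately show ?thesis unfolding vr_def by (cases "v y") auto
    qed
    have veq: "v = (\<lambda>y. ereal (vr y))" using vfin by auto
    have vnn: "0 \<le> vr y" for y
    proof -
      have "(INF y. v y) \<le> v y" by (rule INF_lower) simp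
      then show ?thesis using sv vfin[of y] unfolding subsol_def by simp
    qed
    have vF: "vr a \<le> (vr b + l a * dist a b) / (1 + lam * dist a b)" for a b
    proof -
      have p: "0 < 1 + lam * dist a b" using lam by (simp add: add_pos_nonneg)
      have "ereal lam * ereal (vr a) + gslope (\<lambda>y. ereal (vr y)) a \<le> ereal (l a)"
        using sv unfolding subsol_def veq by simp
      then have "vr a - vr b \<le> (l a - lam * vr a) * dist a b" by (rule sub_cond)
      then have "vr a * (1 + lam * dist a b) \<le> vr b + l a * dist a b" by (simp add: algebra_simps)
      then show ?thesis using p by (simp add: pos_le_divide_eq)
    qed
    have "vr y \<le> s n y" for n y
    proof (induction n arbitrary: y)
      case 0 then show ?case using vu vfin s0 by (metis ereal_less_eq(3))
    next
      case (Suc n)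
      have "vr y \<le> (s n z + l y * dist y z) / (1 + lam * dist y z)" for z
      proof -
        have p: "0 < 1 + lam * dist y z" using lam by (simp add: add_pos_nonneg)
        have "(vr z + l y * dist y z) / (1 + lam * dist y z) \<le> (s n z + l y * dist y z) / (1 + lam * dist y z)"
          using Suc[of z] p by (intro divide_right_mono) auto
        then show ?thesis using vF[of y z] by simp
      qed
      then show ?case unfolding sS by (rule Tr_ge)
    qed
    then have "vr x \<le> w x" by (intro LIMSEQ_le_const[OF lim]) auto
    then show ?thesis using vfin by simp
  qed
  have part1: "Tinf lam l (\<lambda>y. ereal (u y)) x
            = Sup {v x | v. subsol lam l v \<and> (\<forall>y. v y \<le> ereal (u y))}" for x
    unfolding Tinf_eq
  proof (rule sym, rule Sup_eqI)
    fix z assume "z \<in> {v x | v. subsol lam l v \<and> (\<forall>y. v y \<le> ereal (u y))}"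
    then show "z \<le> ereal (w x)" using below by auto
  next
    fix z assume "\<And>t. t \<in> {v x | v. subsol lam l v \<and> (\<forall>y. v y \<le> ereal (u y))} \<Longrightarrow> t \<le> z"
    moreover have "ereal (w x) \<in> {v x | v. subsol lam l v \<and> (\<forall>y. v y \<le> ereal (u y))}"
      using wsubsol wu by auto
    ultimately show "ereal (w x) \<le> z" by blast
  qed
  have part2: "Tinf lam l (\<lambda>y. ereal (u y)) x
            = Sup {v x | v. sol lam l v \<and> (\<forall>y. v y \<le> ereal (u y))}"
    if sup: "supersol lam l (\<lambda>y. ereal (u y))" for x
  proof -
    have lscu: "eventually (\<lambda>y. c < u y) (at z)" if "c < u z" for c z
    proof -
      have "lsc (\<lambda>y. ereal (u y))" using sup unfolding supersol_def by simp
      moreover have "ereal c < ereal (u z)" using that by simp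
      ultimately have "eventually (\<lambda>y. ereal c < ereal (u y)) (at z)"
        unfolding lsc_def by blast
      then show ?thesis by simp
    qed
    have superu: "l z \<le> lam * u z + g" if "g \<ge> 0" "\<And>y. u z - u y \<le> g * dist z y" for z g
    proof -
      have "ereal (l z) \<le> ereal lam * ereal (u z) + gslope (\<lambda>y. ereal (u y)) z"
        using sup unfolding supersol_def by simp
      then show ?thesis by (rule super_cond) (use that in auto)
    qed
    have wlsc: "lsc (\<lambda>y. ereal (w y))"
      unfolding lsc_def
    proof (intro allI impI)
      fix z c assume c: "c < ereal (w z)"
      show "eventually (\<lambda>y. c < ereal (w y)) (at z)"
      proof (cases c)
        case MInf then show ?thesis by simp
      next
        case PInf then show ?thesis using c by simp
      next
        case (real c0)
        then have c0: "c0 < w z" using c by simp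
        define \<rho> where "\<rho> = (w z - c0) / (l z + 1)"
        have lp: "l z + 1 > 0" using lnn[of z] by simp
        have \<rho>0: "\<rho> > 0" unfolding \<rho>_def using c0 lp by simp
        have "c0 < w y" if "dist y z < \<rho>" for y
        proof -
          have "w z - w y \<le> (l z - lam * w z) * dist z y" by (rule wdiff)
          also have "\<dots> \<le> l z * dist z y"
            using lam wnn[of z] by (simp add: algebra_simps mult_nonneg_nonneg)
          also have "\<dots> \<le> l z * \<rho>" using that lnn[of z] by (intro mult_left_mono) (auto simp: dist_commute)
          also have "\<dots> < (l z + 1) * \<rho>" using \<rho>0 by simp
          also have "\<dots> = w z - c0" unfolding \<rho>_def using lp by simp
          finally show ?thesis by simp
        qed
        then show ?thesis unfolding eventually_at real using \<rho>0 by auto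
      qed
    qed
    have wsuper: "supersol lam l (\<lambda>y. ereal (w y))"
      unfolding supersol_def
    proof (intro conjI allI wlsc winf)
      fix z
      show "ereal (w z) \<noteq> -\<infinity>" by simp
      show "ereal (l z) \<le> ereal lam * ereal (w z) + gslope (\<lambda>y. ereal (w y)) z"
      proof (cases "gslope (\<lambda>y. ereal (w y)) z")
        case PInf then show ?thesis by simp
      next
        case MInf then show ?thesis using gs_nn[of w z] by simp
      next
        case (real g)
        have g0: "g \<ge> 0" using gs_nn[of w z] real by simp
        have H: "w z - w y \<le> g * dist z y" for y using gs_ge[of w z g y] real by simp
        have "l z \<le> lam * w z + g"
          by (rule key[OF lam lnn lscl s0 sS snn lim wle lscu superu g0 H])
        then show ?thesis using real by simp
      qed
    qed
    have wsol: "sol lam l (\<lambda>y. ereal (w y))" unfolding sol_def using wsubsol wsuper by simp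
    show ?thesis unfolding Tinf_eq
    proof (rule sym, rule Sup_eqI)
      fix z assume "z \<in> {v x | v. sol lam l v \<and> (\<forall>y. v y \<le> ereal (u y))}"
      then show "z \<le> ereal (w x)" using below unfolding sol_def by auto
    next
      fix z assume "\<And>t. t \<in> {v x | v. sol lam l v \<and> (\<forall>y. v y \<le> ereal (u y))} \<Longrightarrow> t \<le> z"
      moreover have "ereal (w x) \<in> {v x | v. sol lam l v \<and> (\<forall>y. v y \<le> ereal (u y))}"
        using wsol wu by auto
      ultimately show "ereal (w x) \<le> z" by blast
    qed
  qed
  show ?thesis using part1 part2 by blast
qed

end
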